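(* Let $n\ge1$, $d=2^n$, and let $|\psi\rangle$ be an $n$-qubit pure state. For a Clifford unitary $C$ and $\mathbf{s}\in\{0,1\}^n$ let $P(\mathbf{s}|C)=|\langle\mathbf{s}|C|\psi\rangle|^2$, and for $\mathbf{s}_1,\mathbf{s}_2,\mathbf{s}_3,\mathbf{s}_4\in\{0,1\}^n$ let $\mathcal{Q}(\mathbf{s}_1,\mathbf{s}_2,\mathbf{s}_3,\mathbf{s}_4)=\mathbb{E}_C\big[P(\mathbf{s}_1|C)P(\mathbf{s}_2|C)P(\mathbf{s}_3|C)P(\mathbf{s}_4|C)\big]$, where $\mathbb{E}_C$ is the average over the uniform distribution on the $n$-qubit Clifford group. Then $$M_2(|\psi\rangle)=-\log\sum_{\mathbf{s}_1,\dots,\mathbf{s}_4\in\{0,1\}^n}(-2)^{-\|\mathbf{s}_1\oplus\mathbf{s}_2\oplus\mathbf{s}_3\oplus\mathbf{s}_4\|}\,\mathcal{Q}(\mathbf{s}_1,\mathbf{s}_2,\mathbf{s}_3,\mathbf{s}_4)-\log d,$$ where $\oplus$ is bitwise addition mod 2 and $\|\mathbf{x}\|$ is the Hamming weight of $\mathbf{x}\in\{0,1\}^n$.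
   Context: Logarithms are base 2. $\mathcal{P}_n$ is the set of the $4^n$ $n$-qubit Pauli strings $\sigma_1\otimes\cdots\otimes\sigma_n$, $\sigma_i\in\{I,X,Y,Z\}$. The stabilizer 2-Rényi entropy is $M_2(|\psi\rangle)=-\log\sum_{P\in\mathcal{P}_n}\Xi_P(|\psi\rangle)^2-\log d$ with $\Xi_P(|\psi\rangle)=d^{-1}\langle\psi|P|\psi\rangle^2$. The Clifford group consists of the unitaries $C$ with $CPC^\dagger\in\{\pm1,\pm i\}\mathcal{P}_n$ for all $P\in\mathcal{P}_n$ (global phases do not affect $P(\mathbf{s}|C)$, so the uniform average is over the finite group modulo phases). $|\mathbf{s}\rangle$ denotes the computational basis state labeled by the bit string $\mathbf{s}$. *)

theory Defs
  imports Complex_Main "Jordan_Normal_Form.Matrix"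
begin

text \<open>Computational basis states |s> with s in {0,1}^n are encoded by
  natural numbers a < 2^n (bit k of a is the k-th bit of s).\<close>

datatype pauli = PI | PX | PY | PZ

fun pauli_entry :: "pauli \<Rightarrow> bool \<Rightarrow> bool \<Rightarrow> complex" where
  "pauli_entry PI a b = (if a = b then 1 else 0)"
| "pauli_entry PX a b = (if a \<noteq> b then 1 else 0)"
| "pauli_entry PY a b = (if a = b then 0 else if b then - \<i> else \<i>)"
| "pauli_entry PZ a b = (if a = b then (if a then -1 else 1) else 0)"

definition pauli_string :: "nat \<Rightarrow> pauli list \<Rightarrow> complex mat" where
  "pauli_string n p = mat (2^n) (2^n)
     (\<lambda>(a, b). \<Prod>k<n. pauli_entry (p ! k) (bit a k) (bit b k))"

definition pauli_group :: "nat \<Rightarrow> complex mat set" where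
  "pauli_group n = pauli_string n ` {p. length p = n}"

definition adj :: "complex mat \<Rightarrow> complex mat" where
  "adj C = mat (dim_col C) (dim_row C) (\<lambda>(i, j). cnj (C $$ (j, i)))"

definition unitary_mat :: "nat \<Rightarrow> complex mat \<Rightarrow> bool" where
  "unitary_mat d C \<longleftrightarrow> C \<in> carrier_mat d d \<and> C * adj C = 1\<^sub>m d \<and> adj C * C = 1\<^sub>m d"

definition clifford_group :: "nat \<Rightarrow> complex mat set" where
  "clifford_group n = {C. unitary_mat (2^n) C \<and>
     (\<forall>P \<in> pauli_group n. \<exists>\<omega> \<in> {1, -1, \<i>, -\<i>}. \<exists>Q \<in> pauli_group n.
         C * P * adj C = \<omega> \<cdot>\<^sub>m Q)}"

definition clifford_mod_phase :: "nat \<Rightarrow> complex mat set set" where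
  "clifford_mod_phase n =
     (\<lambda>C. {z \<cdot>\<^sub>m C | z. cmod z = 1}) ` clifford_group n"

text \<open>Uniform average over the (finite) Clifford group modulo phases of a
  phase-invariant function f (evaluated at any representative).\<close>
definition clifford_avg :: "nat \<Rightarrow> (complex mat \<Rightarrow> real) \<Rightarrow> real" where
  "clifford_avg n f = (\<Sum>K \<in> clifford_mod_phase n. f (SOME C. C \<in> K))
                       / real (card (clifford_mod_phase n))"

definition is_state :: "nat \<Rightarrow> complex vec \<Rightarrow> bool" where
  "is_state n \<psi> \<longleftrightarrow> \<psi> \<in> carrier_vec (2^n) \<and> (\<Sum>a<2^n. (cmod (\<psi> $ a))^2) = 1"

definition expval :: "complex vec \<Rightarrow> complex mat \<Rightarrow> complex" where
  "expval \<psi> P = (\<Sum>a<dim_vec \<psi>. \<Sum>b<dim_vec \<psi>. cnj (\<psi> $ a) * P $$ (a, b) * \<psi> $ b)"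

definition Xi :: "nat \<Rightarrow> complex vec \<Rightarrow> complex mat \<Rightarrow> real" where
  "Xi n \<psi> P = (cmod (expval \<psi> P))^2 / 2^n"

definition M2 :: "nat \<Rightarrow> complex vec \<Rightarrow> real" where
  "M2 n \<psi> = - log 2 (\<Sum>P \<in> pauli_group n. (Xi n \<psi> P)^2) - log 2 (2^n)"

definition outcome_prob :: "nat \<Rightarrow> complex vec \<Rightarrow> complex mat \<Rightarrow> nat \<Rightarrow> real" where
  "outcome_prob n \<psi> C s = (cmod (\<Sum>b<2^n. C $$ (s, b) * \<psi> $ b))^2"

definition hamming :: "nat \<Rightarrow> nat \<Rightarrow> nat" where
  "hamming n x = card {k. k < n \<and> bit x k}"

definition Qfun :: "nat \<Rightarrow> complex vec \<Rightarrow> nat \<Rightarrow> nat \<Rightarrow> nat \<Rightarrow> nat \<Rightarrow> real" where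
  "Qfun n \<psi> s1 s2 s3 s4 = clifford_avg n (\<lambda>C.
     outcome_prob n \<psi> C s1 * outcome_prob n \<psi> C s2 * outcome_prob n \<psi> C s3 * outcome_prob n \<psi> C s4)"

end

theory Submission
  imports Defs "HOL-Library.FuncSet"
begin

lemma bit_lt_pow: "(c::nat) < 2^n \<Longrightarrow> n \<le> k \<Longrightarrow> \<not> bit c k"
  by (metis bit_take_bit_iff not_le take_bit_nat_eq_self_iff)

lemma sum_bits_prod:
  fixes f :: "nat \<Rightarrow> bool \<Rightarrow> 'a::comm_semiring_1"
  shows "(\<Sum>c::nat<2^n. \<Prod>k<n. f k (bit c k)) = (\<Prod>k<n. f k False + f k True)"
proof (induction n)
  case 0 have "{..<(2::nat)^0} = {0}" by auto
  then show ?case by simp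
next
  case (Suc n)
  have split: "{..<2^Suc n} = {..<(2::nat)^n} \<union> (\<lambda>c. c + 2^n) ` {..<2^n}"
  proof -
    have *: "x \<in> (\<lambda>c. c + 2^n) ` {..<2^n}" if "2^n \<le> x" "x < 2^Suc n" for x :: nat
      using that by (intro image_eqI[of _ _ "x - 2^n"]) auto
    show ?thesis
    proof (rule subset_antisym)
      show "{..<2^Suc n} \<subseteq> {..<(2::nat)^n} \<union> (\<lambda>c. c + 2^n) ` {..<2^n}"
      proof
        fix x :: nat assume "x \<in> {..<2^Suc n}" then show "x \<in> {..<(2::nat)^n} \<union> (\<lambda>c. c + 2^n) ` {..<2^n}"
          using *[of x] by (cases "x < 2^n") auto
      qed
    qed auto
  qed
  have disj: "{..<(2::nat)^n} \<inter> (\<lambda>c. c + 2^n) ` {..<2^n} = {}" by auto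
  have b1: "bit (c + 2^n) k = (if k = n then True else bit c k)" if "c < 2^n" for c k :: nat
  proof -
    have "bit (c + 2^n) k = (bit c k \<or> bit ((2::nat)^n) k)"
      by (rule bit_disjunctive_add_iff) (use that bit_lt_pow in \<open>auto simp: bit_exp_iff\<close>)
    then show ?thesis using that bit_lt_pow[of c n k] by (auto simp: bit_exp_iff)
  qed
  have "(\<Sum>c::nat<2^Suc n. \<Prod>k<Suc n. f k (bit c k))
     = (\<Sum>c::nat<2^n. \<Prod>k<Suc n. f k (bit c k)) + (\<Sum>c::nat<2^n. \<Prod>k<Suc n. f k (bit (c + 2^n) k))"
    unfolding split by (subst sum.union_disjoint) (auto simp: sum.reindex inj_on_def)
  also have "(\<Sum>c::nat<2^n. \<Prod>k<Suc n. f k (bit c k)) = (\<Sum>c::nat<2^n. \<Prod>k<n. f k (bit c k)) * f n False"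
    by (auto simp: sum_distrib_right bit_lt_pow intro!: sum.cong)
  also have "(\<Sum>c::nat<2^n. \<Prod>k<Suc n. f k (bit (c + 2^n) k)) = (\<Sum>c::nat<2^n. \<Prod>k<n. f k (bit c k)) * f n True"
    unfolding sum_distrib_right
  proof (intro sum.cong refl)
    fix c assume c: "c \<in> {..<(2::nat)^n}"
    have "(\<Prod>k<n. f k (bit (c + 2^n) k)) = (\<Prod>k<n. f k (bit c k))"
      using c by (intro prod.cong) (auto simp: b1)
    then show "(\<Prod>k<Suc n. f k (bit (c + 2^n) k)) = (\<Prod>k<n. f k (bit c k)) * f n True"
      using c by (simp add: b1)
  qed
  finally show ?case by (simp add: Suc distrib_left)
qed

lemma bits_eq_iff: "(a::nat) < 2^n \<Longrightarrow> b < 2^n \<Longrightarrow> (\<forall>k<n. bit a k = bit b k) \<longleftrightarrow> a = b"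
  by (metis bit_eq_iff bit_lt_pow not_le)

instance pauli :: finite
proof
  have "UNIV = {PI, PX, PY, PZ}" by (auto intro: pauli.exhaust)
  then show "finite (UNIV :: pauli set)" by (metis finite.emptyI finite_insert)
qed

lemma UNIV_pauli: "(UNIV :: pauli set) = {PI, PX, PY, PZ}" by (auto intro: pauli.exhaust)

lemma sum_lists_prod:
  fixes f :: "nat \<Rightarrow> pauli \<Rightarrow> 'a::comm_semiring_1"
  shows "(\<Sum>p\<in>{p. length p = n}. \<Prod>k<n. f k (p!k)) = (\<Prod>k<n. \<Sum>s\<in>UNIV. f k s)"
proof (induction n)
  case 0 then show ?case by simp
next
  case (Suc n)
  have eq: "{p::pauli list. length p = Suc n} = (\<lambda>(xs, x). xs @ [x]) ` ({p. length p = n} \<times> UNIV)"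
  proof -
    have *: "p \<in> (\<lambda>(xs, x). xs @ [x]) ` ({p. length p = n} \<times> UNIV)" if "length p = Suc n" for p :: "pauli list"
      using that by (intro image_eqI[of _ _ "(butlast p, last p)"])
        (auto, metis append_butlast_last_id list.size(3) nat.distinct(1))
    show ?thesis
      apply (rule subset_antisym)
      subgoal using * by blast
      subgoal by auto
      done
  qed
  have inj: "inj_on (\<lambda>(xs, x). xs @ [x]) ({p. length p = n} \<times> (UNIV :: pauli set))"
    by (auto simp: inj_on_def)
  have fin: "finite {p :: pauli list. length p = n}"
    using finite_lists_length_eq[of "UNIV :: pauli set" n] by simp
  have "(\<Sum>p\<in>{p. length p = Suc n}. \<Prod>k<Suc n. f k (p!k))
      = (\<Sum>xs\<in>{p. length p = n}. \<Sum>x\<in>UNIV. \<Prod>k<Suc n. f k ((xs@[x])!k))"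
    unfolding eq sum.reindex[OF inj] sum.cartesian_product
    by (rule sum.cong) auto
  also have "\<dots> = (\<Sum>xs\<in>{p. length p = n}. \<Sum>x\<in>UNIV. (\<Prod>k<n. f k (xs!k)) * f n x)"
    by (intro sum.cong refl) (auto simp: nth_append intro!: prod.cong)
  also have "\<dots> = (\<Sum>xs\<in>{p. length p = n}. (\<Prod>k<n. f k (xs!k))) * (\<Sum>x\<in>UNIV. f n x)"
    by (rule sum_product[symmetric])
  finally show ?case by (simp add: Suc)
qed


definition m2 :: "(bool \<Rightarrow> bool \<Rightarrow> complex) \<Rightarrow> (bool \<Rightarrow> bool \<Rightarrow> complex) \<Rightarrow> bool \<Rightarrow> bool \<Rightarrow> complex" where
  "m2 G H = (\<lambda>a b. G a False * H False b + G a True * H True b)"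

definition a2 :: "(bool \<Rightarrow> bool \<Rightarrow> complex) \<Rightarrow> bool \<Rightarrow> bool \<Rightarrow> complex" where
  "a2 G = (\<lambda>a b. cnj (G b a))"

definition id2 :: "bool \<Rightarrow> bool \<Rightarrow> complex" where
  "id2 = (\<lambda>a b. if a = b then 1 else 0)"

definition tens :: "nat \<Rightarrow> (nat \<Rightarrow> bool \<Rightarrow> bool \<Rightarrow> complex) \<Rightarrow> complex mat" where
  "tens n G = mat (2^n) (2^n) (\<lambda>(a,b). \<Prod>k<n. G k (bit a k) (bit b k))"

definition trc :: "complex mat \<Rightarrow> complex" where
  "trc M = (\<Sum>a<dim_row M. M $$ (a,a))"

lemma tens_carrier[simp]: "tens n G \<in> carrier_mat (2^n) (2^n)"
  by (simp add: tens_def)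

lemma tens_dims[simp]: "dim_row (tens n G) = 2^n" "dim_col (tens n G) = 2^n"
  by (simp_all add: tens_def)

lemma tens_index: "a < 2^n \<Longrightarrow> b < 2^n \<Longrightarrow> tens n G $$ (a,b) = (\<Prod>k<n. G k (bit a k) (bit b k))"
  by (simp add: tens_def)

lemma mult_index:
  assumes "A \<in> carrier_mat N N" "B \<in> carrier_mat N N" "i < N" "j < N"
  shows "(A * B) $$ (i,j) = (\<Sum>k<N. A $$ (i,k) * B $$ (k,j))"
  using assms by (simp add: scalar_prod_def atLeast0LessThan)

lemma tens_mult: "tens n G * tens n H = tens n (\<lambda>k. m2 (G k) (H k))"
proof (rule eq_matI)
  fix a b assume a: "a < dim_row (tens n (\<lambda>k. m2 (G k) (H k)))" and b: "b < dim_col (tens n (\<lambda>k. m2 (G k) (H k)))"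
  then have a': "a < 2^n" and b': "b < 2^n" by auto
  have "(tens n G * tens n H) $$ (a,b) = (\<Sum>c<2^n. tens n G $$ (a,c) * tens n H $$ (c,b))"
    using a' b' by (intro mult_index) auto
  also have "\<dots> = (\<Sum>c::nat<2^n. \<Prod>k<n. G k (bit a k) (bit c k) * H k (bit c k) (bit b k))"
    using a' b' by (intro sum.cong refl) (simp add: tens_index prod.distrib)
  also have "\<dots> = (\<Prod>k<n. m2 (G k) (H k) (bit a k) (bit b k))"
    by (subst sum_bits_prod) (simp add: m2_def)
  finally show "(tens n G * tens n H) $$ (a,b) = tens n (\<lambda>k. m2 (G k) (H k)) $$ (a,b)"
    using a' b' by (simp add: tens_index)
qed auto

lemma adj_dims[simp]: "dim_row (adj A) = dim_col A" "dim_col (adj A) = dim_row A"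
  by (simp_all add: adj_def)

lemma adj_carrier[simp]: "A \<in> carrier_mat r c \<Longrightarrow> adj A \<in> carrier_mat c r"
  unfolding carrier_mat_def by simp

lemma adj_index: "i < dim_col A \<Longrightarrow> j < dim_row A \<Longrightarrow> adj A $$ (i,j) = cnj (A $$ (j,i))"
  unfolding adj_def by simp

lemma adj_tens: "adj (tens n G) = tens n (\<lambda>k. a2 (G k))"
  by (rule eq_matI) (auto simp: adj_index tens_index a2_def)

lemma tens_smult: "tens n (\<lambda>k a b. c k * G k a b) = (\<Prod>k<n. c k) \<cdot>\<^sub>m tens n G"
  by (rule eq_matI) (auto simp: tens_index prod.distrib)

lemma prod_ind: "finite A \<Longrightarrow> (\<Prod>k\<in>A. if P k then (1::'a::comm_semiring_1) else 0) = (if \<forall>k\<in>A. P k then 1 else 0)"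
  by (induction A rule: finite_induct) auto

lemma tens_id: "tens n (\<lambda>k. id2) = 1\<^sub>m (2^n)"
proof (rule eq_matI)
  fix a b assume "a < dim_row (1\<^sub>m (2^n) :: complex mat)" "b < dim_col (1\<^sub>m (2^n) :: complex mat)"
  then have a: "a < 2^n" and b: "b < 2^n" by auto
  have "tens n (\<lambda>k. id2) $$ (a,b) = (\<Prod>k<n. if bit a k = bit b k then 1 else 0)"
    using a b by (simp add: tens_index id2_def)
  also have "\<dots> = (if a = b then 1 else 0)"
    by (subst prod_ind) (use bits_eq_iff[OF a b] in auto)
  finally show "tens n (\<lambda>k. id2) $$ (a,b) = 1\<^sub>m (2^n) $$ (a,b)" using a b by simp
qed auto

lemma pauli_tens: "pauli_string n p = tens n (\<lambda>k. pauli_entry (p!k))"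
  by (simp add: pauli_string_def tens_def)

lemma trc_tens: "trc (tens n G) = (\<Prod>k<n. G k False False + G k True True)"
proof -
  have "trc (tens n G) = (\<Sum>a::nat<2^n. \<Prod>k<n. G k (bit a k) (bit a k))"
    by (simp add: trc_def tens_index)
  also have "\<dots> = (\<Prod>k<n. G k False False + G k True True)"
    by (subst sum_bits_prod) simp
  finally show ?thesis .
qed


definition appn :: "nat \<Rightarrow> complex mat \<Rightarrow> complex vec \<Rightarrow> complex vec" where
  "appn n C v = vec (2^n) (\<lambda>s. \<Sum>b<2^n. C $$ (s,b) * v $ b)"

lemma appn_dim[simp]: "dim_vec (appn n C v) = 2^n" by (simp add: appn_def)

lemma appn_index: "s < 2^n \<Longrightarrow> appn n C v $ s = (\<Sum>b<2^n. C $$ (s,b) * v $ b)"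
  by (simp add: appn_def)

lemma outcome_appn: "s < 2^n \<Longrightarrow> outcome_prob n \<psi> C s = (cmod (appn n C \<psi> $ s))^2"
  by (simp add: outcome_prob_def appn_index)

lemma sum4_swap: "(\<Sum>a\<in>A. \<Sum>b\<in>B. \<Sum>c\<in>C. \<Sum>e\<in>E. f a b c e) = (\<Sum>c\<in>C. \<Sum>e\<in>E. \<Sum>b\<in>B. \<Sum>a\<in>A. f a b c e)"
proof -
  have "(\<Sum>a\<in>A. \<Sum>b\<in>B. \<Sum>c\<in>C. \<Sum>e\<in>E. f a b c e) = (\<Sum>a\<in>A. \<Sum>c\<in>C. \<Sum>b\<in>B. \<Sum>e\<in>E. f a b c e)"
    by (rule sum.cong[OF refl], rule sum.swap)
  also have "\<dots> = (\<Sum>c\<in>C. \<Sum>a\<in>A. \<Sum>b\<in>B. \<Sum>e\<in>E. f a b c e)" by (rule sum.swap)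
  also have "\<dots> = (\<Sum>c\<in>C. \<Sum>a\<in>A. \<Sum>e\<in>E. \<Sum>b\<in>B. f a b c e)"
    by (rule sum.cong[OF refl], rule sum.cong[OF refl], rule sum.swap)
  also have "\<dots> = (\<Sum>c\<in>C. \<Sum>e\<in>E. \<Sum>a\<in>A. \<Sum>b\<in>B. f a b c e)"
    by (rule sum.cong[OF refl], rule sum.swap)
  also have "\<dots> = (\<Sum>c\<in>C. \<Sum>e\<in>E. \<Sum>b\<in>B. \<Sum>a\<in>A. f a b c e)"
    by (rule sum.cong[OF refl], rule sum.cong[OF refl], rule sum.swap)
  finally show ?thesis .
qed

lemma expval_appn:
  assumes A: "A \<in> carrier_mat (2^n) (2^n)" and M: "M \<in> carrier_mat (2^n) (2^n)"
    and v: "v \<in> carrier_vec (2^n)"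
  shows "expval (appn n A v) M = expval v (adj A * M * A)"
proof -
  define N where "N = (2::nat)^n"
  have A': "A \<in> carrier_mat N N" and M': "M \<in> carrier_mat N N" using A M by (simp_all add: N_def)
  have idx: "(adj A * M * A) $$ (c,e) = (\<Sum>b<N. (\<Sum>a<N. cnj (A $$ (a,c)) * M $$ (a,b)) * A $$ (b,e))"
    if c: "c < N" and e: "e < N" for c e
  proof -
    have AM: "adj A * M \<in> carrier_mat N N" using A' M' by (metis adj_carrier mult_carrier_mat)
    have "(adj A * M * A) $$ (c,e) = (\<Sum>b<N. (adj A * M) $$ (c,b) * A $$ (b,e))"
      by (rule mult_index[OF AM A' c e])
    also have "\<dots> = (\<Sum>b<N. (\<Sum>a<N. cnj (A $$ (a,c)) * M $$ (a,b)) * A $$ (b,e))"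
    proof (rule sum.cong[OF refl])
      fix b assume "b \<in> {..<N}"
      then have "(adj A * M) $$ (c,b) = (\<Sum>a<N. adj A $$ (c,a) * M $$ (a,b))"
        using A' M' c by (intro mult_index) auto
      also have "\<dots> = (\<Sum>a<N. cnj (A $$ (a,c)) * M $$ (a,b))"
        using A' c by (intro sum.cong refl) (auto simp: adj_index)
      finally show "(adj A * M) $$ (c,b) * A $$ (b,e) = (\<Sum>a<N. cnj (A $$ (a,c)) * M $$ (a,b)) * A $$ (b,e)" by simp
    qed
    finally show ?thesis .
  qed
  have "expval (appn n A v) M = (\<Sum>a<N. \<Sum>b<N. cnj (\<Sum>c<N. A $$ (a,c) * v $ c) * M $$ (a,b) * (\<Sum>e<N. A $$ (b,e) * v $ e))"
    by (simp add: expval_def appn_index N_def)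
  also have "\<dots> = (\<Sum>a<N. \<Sum>b<N. \<Sum>e<N. \<Sum>c<N. cnj (A $$ (a,c)) * cnj (v $ c) * M $$ (a,b) * (A $$ (b,e) * v $ e))"
    by (simp add: sum_distrib_left sum_distrib_right mult.assoc)
  also have "\<dots> = (\<Sum>a<N. \<Sum>b<N. \<Sum>c<N. \<Sum>e<N. cnj (A $$ (a,c)) * cnj (v $ c) * M $$ (a,b) * (A $$ (b,e) * v $ e))"
    by (rule sum.cong[OF refl], rule sum.cong[OF refl], rule sum.swap)
  also have "\<dots> = (\<Sum>c<N. \<Sum>e<N. \<Sum>b<N. \<Sum>a<N. cnj (A $$ (a,c)) * cnj (v $ c) * M $$ (a,b) * (A $$ (b,e) * v $ e))"
    by (rule sum4_swap)
  also have "\<dots> = (\<Sum>c<N. \<Sum>e<N. cnj (v $ c) * (adj A * M * A) $$ (c,e) * v $ e)"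
  proof (intro sum.cong refl)
    fix c e assume c: "c \<in> {..<N}" and e: "e \<in> {..<N}"
    have "(\<Sum>b<N. \<Sum>a<N. cnj (A $$ (a,c)) * cnj (v $ c) * M $$ (a,b) * (A $$ (b,e) * v $ e))
        = (\<Sum>b<N. \<Sum>a<N. cnj (v $ c) * (cnj (A $$ (a,c)) * M $$ (a,b) * A $$ (b,e)) * v $ e)"
      by (intro sum.cong refl) (simp add: mult_ac)
    also have "\<dots> = cnj (v $ c) * (\<Sum>b<N. (\<Sum>a<N. cnj (A $$ (a,c)) * M $$ (a,b)) * A $$ (b,e)) * v $ e"
      by (simp add: sum_distrib_left sum_distrib_right)
    finally show "(\<Sum>b<N. \<Sum>a<N. cnj (A $$ (a,c)) * cnj (v $ c) * M $$ (a,b) * (A $$ (b,e) * v $ e))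
        = cnj (v $ c) * (adj A * M * A) $$ (c,e) * v $ e"
      using c e by (simp add: idx)
  qed
  also have "\<dots> = expval v (adj A * M * A)"
    using v by (simp add: expval_def N_def)
  finally show ?thesis .
qed


lemma appn_mult:
  assumes A: "A \<in> carrier_mat (2^n) (2^n)" and B: "B \<in> carrier_mat (2^n) (2^n)"
  shows "appn n (A * B) v = appn n A (appn n B v)"
proof (rule eq_vecI)
  fix s assume "s < dim_vec (appn n A (appn n B v))"
  then have s: "s < 2^n" by simp
  have "appn n (A * B) v $ s = (\<Sum>b<2^n. (\<Sum>k<2^n. A $$ (s,k) * B $$ (k,b)) * v $ b)"
    using s A B by (auto simp: appn_index scalar_prod_def atLeast0LessThan intro!: sum.cong)
  also have "\<dots> = (\<Sum>k<2^n. A $$ (s,k) * (\<Sum>b<2^n. B $$ (k,b) * v $ b))"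
  proof -
    have "(\<Sum>b<2^n. (\<Sum>k<2^n. A $$ (s,k) * B $$ (k,b)) * v $ b) = (\<Sum>b<(2::nat)^n. \<Sum>k<(2::nat)^n. A $$ (s,k) * (B $$ (k,b) * v $ b))"
      by (simp add: sum_distrib_right mult.assoc)
    also have "\<dots> = (\<Sum>k<(2::nat)^n. \<Sum>b<(2::nat)^n. A $$ (s,k) * (B $$ (k,b) * v $ b))"
      by (rule sum.swap)
    also have "\<dots> = (\<Sum>k<2^n. A $$ (s,k) * (\<Sum>b<2^n. B $$ (k,b) * v $ b))"
      by (simp add: sum_distrib_left)
    finally show ?thesis .
  qed
  also have "\<dots> = appn n A (appn n B v) $ s"
    using s by (simp add: appn_index)
  finally show "appn n (A * B) v $ s = appn n A (appn n B v) $ s" .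
qed simp

lemma if_mult_delta: "(if s = b then (1::complex) else 0) * x = (if b = s then x else 0)" by simp

lemma appn_one: "v \<in> carrier_vec (2^n) \<Longrightarrow> appn n (1\<^sub>m (2^n)) v = v"
  by (rule eq_vecI) (auto simp: appn_index if_mult_delta sum.delta)

lemma appn_smult: "A \<in> carrier_mat (2^n) (2^n) \<Longrightarrow> appn n (z \<cdot>\<^sub>m A) v = z \<cdot>\<^sub>v appn n A v"
  by (rule eq_vecI) (auto simp: appn_index sum_distrib_left mult.assoc)

lemma expval_smult_vec: "expval (z \<cdot>\<^sub>v v) M = (cnj z * z) * expval v M"
  by (simp add: expval_def sum_distrib_left mult_ac)

lemma expval_smult_mat: "M \<in> carrier_mat (dim_vec v) (dim_vec v) \<Longrightarrow> expval v (z \<cdot>\<^sub>m M) = z * expval v M"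
  by (auto simp: expval_def sum_distrib_left mult_ac intro!: sum.cong)

lemma adj_adj: "adj (adj A) = A"
  by (rule eq_matI) (auto simp: adj_index)

lemma adj_mult:
  assumes A: "A \<in> carrier_mat N N" and B: "B \<in> carrier_mat N N"
  shows "adj (A * B) = adj B * adj A"
proof (rule eq_matI)
  fix i j assume "i < dim_row (adj B * adj A)" "j < dim_col (adj B * adj A)"
  then have i: "i < N" and j: "j < N" using A B by auto
  have "adj (A * B) $$ (i,j) = cnj (\<Sum>k<N. A $$ (j,k) * B $$ (k,i))"
    using A B i j by (simp add: adj_index scalar_prod_def atLeast0LessThan)
  also have "\<dots> = (\<Sum>k<N. adj B $$ (i,k) * adj A $$ (k,j))"
    using A B i j by (auto simp: adj_index mult.commute intro!: sum.cong)
  also have "\<dots> = (adj B * adj A) $$ (i,j)"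
    using A B i j by (simp add: scalar_prod_def atLeast0LessThan)
  finally show "adj (A * B) $$ (i,j) = (adj B * adj A) $$ (i,j)" .
qed (use A B in auto)

lemma adj_one: "adj (1\<^sub>m N) = 1\<^sub>m N"
  by (rule eq_matI) (auto simp: adj_index)

lemma adj_smult: "adj (z \<cdot>\<^sub>m A) = cnj z \<cdot>\<^sub>m adj A"
  by (rule eq_matI) (auto simp: adj_index)

lemma smult_one_mat: "(1::complex) \<cdot>\<^sub>m A = A"
  by (rule eq_matI) auto

lemma smult_smult_mat: "a \<cdot>\<^sub>m (b \<cdot>\<^sub>m (A :: complex mat)) = (a * b) \<cdot>\<^sub>m A"
  by (rule eq_matI) auto

definition Om :: "complex set" where "Om = {1, -1, \<i>, -\<i>}"

lemma Om_mult: "a \<in> Om \<Longrightarrow> b \<in> Om \<Longrightarrow> a * b \<in> Om"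
  by (auto simp: Om_def)

lemma Om_cmod: "a \<in> Om \<Longrightarrow> cmod a = 1"
  by (auto simp: Om_def)

lemma Om_nz: "a \<in> Om \<Longrightarrow> a \<noteq> 0"
  by (auto simp: Om_def)

lemma pauli_dims[simp]: "dim_row (pauli_string n p) = 2^n" "dim_col (pauli_string n p) = 2^n"
  by (simp_all add: pauli_string_def)

lemma multN[simp]: "A \<in> carrier_mat N N \<Longrightarrow> B \<in> carrier_mat N N \<Longrightarrow> A * B \<in> carrier_mat N N"
  by simp

lemma assocN: "A \<in> carrier_mat N N \<Longrightarrow> B \<in> carrier_mat N N \<Longrightarrow> C \<in> carrier_mat N N \<Longrightarrow> A * B * C = A * (B * C)"
  by (rule assoc_mult_mat) auto

lemma pauli_carrier[simp]: "pauli_string n p \<in> carrier_mat (2^n) (2^n)"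
  by (simp add: pauli_string_def)

lemma pauli_group_carrier: "P \<in> pauli_group n \<Longrightarrow> P \<in> carrier_mat (2^n) (2^n)"
  by (auto simp: pauli_group_def)

lemma cliff_D:
  assumes "C \<in> clifford_group n"
  shows "C \<in> carrier_mat (2^n) (2^n)" "C * adj C = 1\<^sub>m (2^n)" "adj C * C = 1\<^sub>m (2^n)"
    "\<And>P. P \<in> pauli_group n \<Longrightarrow> \<exists>\<omega> \<in> Om. \<exists>Q \<in> pauli_group n. C * P * adj C = \<omega> \<cdot>\<^sub>m Q"
  using assms by (auto simp: clifford_group_def unitary_mat_def Om_def)

lemma cliff_I:
  assumes "C \<in> carrier_mat (2^n) (2^n)" "C * adj C = 1\<^sub>m (2^n)" "adj C * C = 1\<^sub>m (2^n)"
    "\<And>P. P \<in> pauli_group n \<Longrightarrow> \<exists>\<omega> \<in> Om. \<exists>Q \<in> pauli_group n. C * P * adj C = \<omega> \<cdot>\<^sub>m Q"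
  shows "C \<in> clifford_group n"
  using assms unfolding clifford_group_def unitary_mat_def Om_def by blast

lemma cliff_mult:
  assumes D: "D \<in> clifford_group n" and C: "C \<in> clifford_group n"
  shows "D * C \<in> clifford_group n"
proof (rule cliff_I)
  let ?N = "(2::nat)^n"
  have Dc: "D \<in> carrier_mat ?N ?N" and Cc: "C \<in> carrier_mat ?N ?N" using cliff_D D C by auto
  have aD: "adj D \<in> carrier_mat ?N ?N" and aC: "adj C \<in> carrier_mat ?N ?N" using Dc Cc by auto
  have adjDC: "adj (D * C) = adj C * adj D" by (rule adj_mult[OF Dc Cc])
  show "D * C \<in> carrier_mat ?N ?N" using Dc Cc by simp
  show "D * C * adj (D * C) = 1\<^sub>m ?N"
  proof -
    have "D * C * adj (D * C) = D * (C * adj C) * adj D"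
      using Dc Cc aD aC by (simp add: adjDC assocN[of _ ?N])
    also have "\<dots> = 1\<^sub>m ?N" using cliff_D[OF C] cliff_D[OF D] Dc by simp
    finally show ?thesis .
  qed
  show "adj (D * C) * (D * C) = 1\<^sub>m ?N"
  proof -
    have "adj (D * C) * (D * C) = adj C * (adj D * D) * C"
      using Dc Cc aD aC by (simp add: adjDC assocN[of _ ?N])
    also have "\<dots> = 1\<^sub>m ?N" using cliff_D[OF C] cliff_D[OF D] Cc aC by simp
    finally show ?thesis .
  qed
  fix P assume P: "P \<in> pauli_group n"
  then have Pc: "P \<in> carrier_mat ?N ?N" by (rule pauli_group_carrier)
  obtain \<omega> Q where \<omega>: "\<omega> \<in> Om" and Q: "Q \<in> pauli_group n" and CP: "C * P * adj C = \<omega> \<cdot>\<^sub>m Q"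
    using cliff_D(4)[OF C P] by blast
  have Qc: "Q \<in> carrier_mat ?N ?N" using Q by (rule pauli_group_carrier)
  obtain \<omega>' Q' where \<omega>': "\<omega>' \<in> Om" and Q': "Q' \<in> pauli_group n" and DQ: "D * Q * adj D = \<omega>' \<cdot>\<^sub>m Q'"
    using cliff_D(4)[OF D Q] by blast
  have "D * C * P * adj (D * C) = D * (C * P * adj C) * adj D"
    using Dc Cc aD aC Pc by (simp add: adjDC assocN[of _ ?N])
  also have "\<dots> = \<omega> \<cdot>\<^sub>m (D * Q * adj D)"
    using Dc Qc aD by (simp add: CP mult_smult_distrib[where nr="?N" and n="?N" and nc="?N"] mult_smult_assoc_mat[where nr="?N" and n="?N" and nc="?N"])
  also have "\<dots> = (\<omega> * \<omega>') \<cdot>\<^sub>m Q'" by (simp add: DQ smult_smult_mat)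
  finally show "\<exists>\<omega>\<in>Om. \<exists>Q\<in>pauli_group n. D * C * P * adj (D * C) = \<omega> \<cdot>\<^sub>m Q"
    using Om_mult[OF \<omega> \<omega>'] Q' by blast
qed

lemma one_cliff: "1\<^sub>m (2^n) \<in> clifford_group n"
proof (rule cliff_I)
  fix P assume "P \<in> pauli_group n"
  then have "P \<in> carrier_mat (2^n) (2^n)" by (rule pauli_group_carrier)
  then have "1\<^sub>m (2^n) * P * adj (1\<^sub>m (2^n)) = 1 \<cdot>\<^sub>m P"
    by (simp add: adj_one smult_one_mat)
  then show "\<exists>\<omega>\<in>Om. \<exists>Q\<in>pauli_group n. 1\<^sub>m (2^n) * P * adj (1\<^sub>m (2^n)) = \<omega> \<cdot>\<^sub>m Q"
    using \<open>P \<in> pauli_group n\<close> by (auto simp: Om_def)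
qed (auto simp: adj_one)

lemma single_trace: "m2 (a2 (pauli_entry s)) (pauli_entry t) False False + m2 (a2 (pauli_entry s)) (pauli_entry t) True True
   = (if s = t then 2 else 0)"
  by (cases s; cases t) (simp_all add: m2_def a2_def)

lemma prod_if2: "finite A \<Longrightarrow> (\<Prod>k\<in>A. if P k then (c::complex) else 0) = (if \<forall>k\<in>A. P k then c ^ card A else 0)"
  by (induction A rule: finite_induct) auto

lemma trc_smult: "dim_row M = dim_col M \<Longrightarrow> trc (z \<cdot>\<^sub>m M) = z * trc M"
  by (simp add: trc_def sum_distrib_left)

lemma pauli_trace:
  assumes "length p = n" "length q = n"
  shows "trc (adj (pauli_string n p) * pauli_string n q) = (if p = q then 2^n else 0)"
proof -
  have "trc (adj (pauli_string n p) * pauli_string n q) = (\<Prod>k<n. if p!k = q!k then 2 else 0)"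
    by (simp add: pauli_tens adj_tens tens_mult trc_tens single_trace del: pauli_dims pauli_carrier)
  also have "\<dots> = (if p = q then 2^n else 0)"
    using assms by (simp add: prod_if2 list_eq_iff_nth_eq)
  finally show ?thesis .
qed

lemma pauli_indep:
  assumes "length p = n" "length q = n" "pauli_string n p = c \<cdot>\<^sub>m pauli_string n q"
  shows "p = q"
proof (rule ccontr)
  assume "p \<noteq> q"
  have "trc (adj (pauli_string n p) * pauli_string n p) = 2^n" using pauli_trace[OF assms(1,1)] by simp
  also have "adj (pauli_string n p) * pauli_string n p = c \<cdot>\<^sub>m (adj (pauli_string n p) * pauli_string n q)"
    by (subst (2) assms(3), rule mult_smult_distrib[where nr="2^n" and n="2^n" and nc="2^n"]) auto
  finally have "c * trc (adj (pauli_string n p) * pauli_string n q) = 2^n" by (subst (asm) trc_smult) simp_all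
  then show False using pauli_trace[OF assms(1,2)] \<open>p \<noteq> q\<close> by simp
qed

lemma pauli_inj: "inj_on (pauli_string n) {p. length p = n}"
  by (rule inj_onI) (metis (mono_tags) mem_Collect_eq pauli_indep smult_one_mat)


lemma fin_L: "finite {p :: pauli list. length p = n}"
  using finite_lists_length_eq[of "UNIV :: pauli set" n] by simp

lemma sandwich_back:
  assumes C: "C \<in> carrier_mat N N" and u: "adj C * C = 1\<^sub>m N" and M: "M \<in> carrier_mat N N"
  shows "adj C * (C * M * adj C) * C = M"
proof -
  have aC: "adj C \<in> carrier_mat N N" using C by simp
  have "adj C * (C * M * adj C) * C = (adj C * C) * M * (adj C * C)"
    using C aC M by (simp add: assocN[of _ N])
  then show ?thesis using u M by simp
qed

lemma cliff_invariant:
  assumes C: "C \<in> clifford_group n" and psi: "\<psi> \<in> carrier_vec (2^n)"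
  shows "(\<Sum>p\<in>{p. length p = n}. cmod (expval (appn n C \<psi>) (pauli_string n p)) ^ 4)
       = (\<Sum>p\<in>{p. length p = n}. cmod (expval \<psi> (pauli_string n p)) ^ 4)"
proof -
  let ?N = "(2::nat)^n"
  let ?L = "{p :: pauli list. length p = n}"
  let ?P = "pauli_string n"
  define \<phi> where "\<phi> = appn n C \<psi>"
  have Cc: "C \<in> carrier_mat ?N ?N" and u1: "C * adj C = 1\<^sub>m ?N" and u2: "adj C * C = 1\<^sub>m ?N"
    using cliff_D[OF C] by auto
  have aC: "adj C \<in> carrier_mat ?N ?N" using Cc by simp
  have psi_back: "appn n (adj C) \<phi> = \<psi>"
    unfolding \<phi>_def using appn_mult[OF aC Cc, of \<psi>] u2 appn_one[OF psi] by simp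
  have "\<forall>p\<in>?L. \<exists>qw. fst qw \<in> ?L \<and> snd qw \<in> Om \<and> C * ?P p * adj C = snd qw \<cdot>\<^sub>m ?P (fst qw)"
  proof
    fix p assume "p \<in> ?L"
    then have "?P p \<in> pauli_group n" by (auto simp: pauli_group_def)
    from cliff_D(4)[OF C this] obtain w Q where "w \<in> Om" "Q \<in> pauli_group n" "C * ?P p * adj C = w \<cdot>\<^sub>m Q"
      by blast
    then obtain q where "q \<in> ?L" "C * ?P p * adj C = w \<cdot>\<^sub>m ?P q" by (auto simp: pauli_group_def)
    then show "\<exists>qw. fst qw \<in> ?L \<and> snd qw \<in> Om \<and> C * ?P p * adj C = snd qw \<cdot>\<^sub>m ?P (fst qw)"
      using \<open>w \<in> Om\<close> by (intro exI[of _ "(q, w)"]) simp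
  qed
  from bchoice[OF this] obtain f where f: "\<forall>p\<in>?L. fst (f p) \<in> ?L \<and> snd (f p) \<in> Om \<and> C * ?P p * adj C = snd (f p) \<cdot>\<^sub>m ?P (fst (f p))"
    by blast
  define \<sigma> where "\<sigma> p = fst (f p)" for p
  define \<omega> where "\<omega> p = snd (f p)" for p
  have sig: "\<And>p. p \<in> ?L \<Longrightarrow> \<sigma> p \<in> ?L" using f by (simp add: \<sigma>_def)
  have om: "\<And>p. p \<in> ?L \<Longrightarrow> \<omega> p \<in> Om \<and> C * ?P p * adj C = \<omega> p \<cdot>\<^sub>m ?P (\<sigma> p)"
    using f by (simp add: \<sigma>_def \<omega>_def)
  have bk: "?P p = \<omega> p \<cdot>\<^sub>m (adj C * ?P (\<sigma> p) * C)" if p: "p \<in> ?L" for p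
  proof -
    have "?P p = adj C * (C * ?P p * adj C) * C" using sandwich_back[OF Cc u2, of "?P p"] by simp
    also have "\<dots> = adj C * (\<omega> p \<cdot>\<^sub>m ?P (\<sigma> p)) * C" using om[OF p] by simp
    also have "\<dots> = \<omega> p \<cdot>\<^sub>m (adj C * ?P (\<sigma> p) * C)"
      using aC Cc by (simp add: mult_smult_distrib[where nr="?N" and n="?N" and nc="?N"] mult_smult_assoc_mat[where nr="?N" and n="?N" and nc="?N"])
    finally show ?thesis .
  qed
  have inj: "inj_on \<sigma> ?L"
  proof (rule inj_onI)
    fix p p' assume p: "p \<in> ?L" and p': "p' \<in> ?L" and eq: "\<sigma> p = \<sigma> p'"
    define X where "X = adj C * ?P (\<sigma> p) * C"
    have X: "X \<in> carrier_mat ?N ?N" using aC Cc by (simp add: X_def)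
    have e1: "?P p = \<omega> p \<cdot>\<^sub>m X" using bk[OF p] by (simp add: X_def)
    have e2: "?P p' = \<omega> p' \<cdot>\<^sub>m X" using bk[OF p'] eq by (simp add: X_def)
    have nz: "\<omega> p' \<noteq> 0" using om[OF p'] Om_nz by blast
    have "?P p = (\<omega> p / \<omega> p') \<cdot>\<^sub>m ?P p'"
      using nz by (simp add: e1 e2 smult_smult_mat)
    then show "p = p'" using pauli_indep p p' by blast
  qed
  have img: "\<sigma> ` ?L = ?L"
    by (rule endo_inj_surj[OF fin_L _ inj], rule image_subsetI, erule sig)
  have ev: "cmod (expval \<psi> (?P p)) = cmod (expval \<phi> (?P (\<sigma> p)))" if p: "p \<in> ?L" for p
  proof -
    have phic: "\<phi> \<in> carrier_vec ?N" unfolding \<phi>_def carrier_vec_def by simp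
    have "expval \<psi> (?P p) = expval \<phi> (adj (adj C) * ?P p * adj C)"
      using expval_appn[OF aC _ phic, of "?P p"] psi_back by simp
    also have "\<dots> = expval \<phi> (\<omega> p \<cdot>\<^sub>m ?P (\<sigma> p))" using om[OF p] by (simp add: adj_adj)
    also have "\<dots> = \<omega> p * expval \<phi> (?P (\<sigma> p))"
      by (rule expval_smult_mat) (unfold \<phi>_def, simp)
    finally show ?thesis using om[OF p] Om_cmod by (simp add: norm_mult)
  qed
  have "(\<Sum>p\<in>?L. cmod (expval \<psi> (?P p)) ^ 4) = (\<Sum>p\<in>?L. cmod (expval \<phi> (?P (\<sigma> p))) ^ 4)"
    using ev by simp
  also have "\<dots> = (\<Sum>q\<in>\<sigma> ` ?L. cmod (expval \<phi> (?P q)) ^ 4)"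
    by (simp add: sum.reindex[OF inj])
  also have "\<dots> = (\<Sum>q\<in>?L. cmod (expval \<phi> (?P q)) ^ 4)" using img by simp
  finally show ?thesis unfolding \<phi>_def by (rule sym)
qed

definition cls :: "complex mat \<Rightarrow> complex mat set" where
  "cls C = {z \<cdot>\<^sub>m C | z. cmod z = 1}"

definition rep :: "complex mat set \<Rightarrow> complex mat" where
  "rep K = (SOME C. C \<in> K)"

lemma cmp_def': "clifford_mod_phase n = cls ` clifford_group n"
  by (simp add: clifford_mod_phase_def cls_def)

lemma avg_def': "clifford_avg n f = (\<Sum>K \<in> clifford_mod_phase n. f (rep K)) / real (card (clifford_mod_phase n))"
  by (simp add: clifford_avg_def rep_def)

lemma cls_self: "C \<in> cls C"
  unfolding cls_def by (rule CollectI, rule exI[of _ 1]) (simp add: smult_one_mat)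

lemma rep_cls: "\<exists>z. cmod z = 1 \<and> rep (cls C) = z \<cdot>\<^sub>m C"
proof -
  have "rep (cls C) \<in> cls C" unfolding rep_def by (rule someI, rule cls_self)
  then show ?thesis by (auto simp: cls_def)
qed

lemma cls_smult: "cmod w = 1 \<Longrightarrow> cls (w \<cdot>\<^sub>m C) = cls C"
proof -
  assume w: "cmod w = 1"
  then have w0: "w \<noteq> 0" by auto
  show ?thesis
  proof
    show "cls (w \<cdot>\<^sub>m C) \<subseteq> cls C"
      using w by (auto simp: cls_def smult_smult_mat norm_mult)
    show "cls C \<subseteq> cls (w \<cdot>\<^sub>m C)"
    proof
      fix X assume "X \<in> cls C"
      then obtain z where z: "cmod z = 1" "X = z \<cdot>\<^sub>m C" by (auto simp: cls_def)
      then have "X = (z / w) \<cdot>\<^sub>m (w \<cdot>\<^sub>m C)" using w0 by (simp add: smult_smult_mat)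
      moreover have "cmod (z / w) = 1" using z w by (simp add: norm_divide)
      ultimately show "X \<in> cls (w \<cdot>\<^sub>m C)" by (auto simp: cls_def)
    qed
  qed
qed

lemma cls_eqD: "cls A = cls B \<Longrightarrow> \<exists>w. cmod w = 1 \<and> A = w \<cdot>\<^sub>m B"
  using cls_self[of A] by (auto simp: cls_def)

lemma rep_cmp: "K \<in> clifford_mod_phase n \<Longrightarrow> \<exists>C \<in> clifford_group n. \<exists>z. cmod z = 1 \<and> K = cls C \<and> rep K = z \<cdot>\<^sub>m C"
  unfolding cmp_def' using rep_cls by blast

lemma rep_carrier: "K \<in> clifford_mod_phase n \<Longrightarrow> rep K \<in> carrier_mat (2^n) (2^n)"
  using rep_cmp[of K n] cliff_D(1) by fastforce

lemma avg_cong: "(\<And>K. K \<in> clifford_mod_phase n \<Longrightarrow> f (rep K) = g (rep K)) \<Longrightarrow> clifford_avg n f = clifford_avg n g"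
  unfolding avg_def' by (simp cong: sum.cong)

lemma cmp_nonempty: "clifford_mod_phase n \<noteq> {}"
  using one_cliff unfolding cmp_def' by blast

lemma avg_const:
  assumes fin: "finite (clifford_mod_phase n)"
    and f: "\<And>C z. C \<in> clifford_group n \<Longrightarrow> cmod z = 1 \<Longrightarrow> f (z \<cdot>\<^sub>m C) = c"
  shows "clifford_avg n f = c"
proof -
  have "(\<Sum>K \<in> clifford_mod_phase n. f (rep K)) = (\<Sum>K \<in> clifford_mod_phase n. c)"
    using rep_cmp f by (intro sum.cong refl) fastforce
  moreover have "card (clifford_mod_phase n) \<noteq> 0" using fin cmp_nonempty by simp
  ultimately show ?thesis unfolding avg_def' by simp
qed

lemma avg_reindex:
  assumes fin: "finite (clifford_mod_phase n)" and D: "D \<in> clifford_group n"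
    and g: "\<And>X w. X \<in> carrier_mat (2^n) (2^n) \<Longrightarrow> cmod w = 1 \<Longrightarrow> g (w \<cdot>\<^sub>m X) = g X"
  shows "clifford_avg n (\<lambda>C. g (D * C)) = clifford_avg n g"
proof -
  let ?N = "(2::nat)^n"
  let ?K = "clifford_mod_phase n"
  define \<Phi> where "\<Phi> K = cls (D * rep K)" for K
  have Dc: "D \<in> carrier_mat ?N ?N" and uD: "adj D * D = 1\<^sub>m ?N" using cliff_D[OF D] by auto
  have Phi_cls: "\<Phi> K = cls (D * C)" if "K \<in> ?K" "C \<in> clifford_group n" "K = cls C" "rep K = z \<cdot>\<^sub>m C" "cmod z = 1" for K C z
  proof -
    have Cc: "C \<in> carrier_mat ?N ?N" using cliff_D(1)[OF that(2)] .
    have "D * rep K = z \<cdot>\<^sub>m (D * C)" using that(4) Dc Cc by (simp add: mult_smult_distrib[where nr="?N" and n="?N" and nc="?N"])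
    then show ?thesis using that(5) by (simp add: \<Phi>_def cls_smult)
  qed
  have into: "\<Phi> ` ?K \<subseteq> ?K"
  proof
    fix K' assume "K' \<in> \<Phi> ` ?K"
    then obtain K where K: "K \<in> ?K" and K': "K' = \<Phi> K" by blast
    obtain C z where C: "C \<in> clifford_group n" "cmod z = 1" "K = cls C" "rep K = z \<cdot>\<^sub>m C" using rep_cmp[OF K] by blast
    have "K' = cls (D * C)" using Phi_cls[OF K C(1) C(3) C(4) C(2)] K' by simp
    then show "K' \<in> ?K" using cliff_mult[OF D C(1)] unfolding cmp_def' by blast
  qed
  have inj: "inj_on \<Phi> ?K"
  proof (rule inj_onI)
    fix K1 K2 assume K1: "K1 \<in> ?K" and K2: "K2 \<in> ?K" and eq: "\<Phi> K1 = \<Phi> K2"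
    obtain C1 z1 where C1: "C1 \<in> clifford_group n" "cmod z1 = 1" "K1 = cls C1" "rep K1 = z1 \<cdot>\<^sub>m C1" using rep_cmp[OF K1] by blast
    obtain C2 z2 where C2: "C2 \<in> clifford_group n" "cmod z2 = 1" "K2 = cls C2" "rep K2 = z2 \<cdot>\<^sub>m C2" using rep_cmp[OF K2] by blast
    have "cls (D * C1) = cls (D * C2)"
      using Phi_cls[OF K1 C1(1) C1(3) C1(4) C1(2)] Phi_cls[OF K2 C2(1) C2(3) C2(4) C2(2)] eq by simp
    then obtain w where w: "cmod w = 1" "D * C1 = w \<cdot>\<^sub>m (D * C2)" using cls_eqD by blast
    have C1c: "C1 \<in> carrier_mat ?N ?N" and C2c: "C2 \<in> carrier_mat ?N ?N" using cliff_D(1) C1(1) C2(1) by auto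
    have aD: "adj D \<in> carrier_mat ?N ?N" using Dc by simp
    have "C1 = adj D * (D * C1)" using C1c Dc aD uD by (simp add: assocN[of _ ?N, symmetric])
    also have "\<dots> = w \<cdot>\<^sub>m (adj D * (D * C2))" using w(2) aD Dc C2c by (simp add: mult_smult_distrib[where nr="?N" and n="?N" and nc="?N"])
    also have "adj D * (D * C2) = C2" using C2c Dc aD uD by (simp add: assocN[of _ ?N, symmetric])
    finally have "C1 = w \<cdot>\<^sub>m C2" .
    then show "K1 = K2" using C1(3) C2(3) cls_smult[OF w(1)] by simp
  qed
  have img: "\<Phi> ` ?K = ?K" by (rule endo_inj_surj[OF fin into inj])
  have "(\<Sum>K\<in>?K. g (rep K)) = (\<Sum>K\<in>\<Phi> ` ?K. g (rep K))" using img by simp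
  also have "\<dots> = (\<Sum>K\<in>?K. g (rep (\<Phi> K)))" by (simp add: sum.reindex[OF inj])
  also have "\<dots> = (\<Sum>K\<in>?K. g (D * rep K))"
  proof (rule sum.cong[OF refl])
    fix K assume K: "K \<in> ?K"
    obtain z where "cmod z = 1" "rep (\<Phi> K) = z \<cdot>\<^sub>m (D * rep K)" using rep_cls[of "D * rep K"] by (auto simp: \<Phi>_def)
    moreover have "D * rep K \<in> carrier_mat ?N ?N" using rep_carrier[OF K] Dc by simp
    ultimately show "g (rep (\<Phi> K)) = g (D * rep K)" using g by simp
  qed
  finally show ?thesis unfolding avg_def' by simp
qed


definition rr :: complex where "rr = complex_of_real (sqrt (1/2))"

lemma rr_sq: "rr * rr = 1/2"
proof -
  have "rr * rr = complex_of_real (sqrt (1/2) * sqrt (1/2))" by (simp only: rr_def of_real_mult)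
  also have "sqrt (1/2) * sqrt (1/2) = (1/2::real)" by simp
  finally show ?thesis by simp
qed

lemma rr_sq': "rr * (rr * x) = x / 2"
  by (simp add: mult.assoc[symmetric] rr_sq)

lemma rr_i: "\<i> * rr * (\<i> * rr) = -1/2"
proof -
  have "\<i> * rr * (\<i> * rr) = (\<i> * \<i>) * (rr * rr)" by (simp only: mult_ac)
  then show ?thesis by (simp add: rr_sq)
qed

lemma cnj_rr[simp]: "cnj rr = rr" by (simp add: rr_def)

definition Hd :: "bool \<Rightarrow> bool \<Rightarrow> complex" where
  "Hd = (\<lambda>a b. if a \<and> b then - rr else rr)"

definition gY :: "bool \<Rightarrow> bool \<Rightarrow> complex" where
  "gY = (\<lambda>a b. if b then (if a then \<i> * rr else - \<i> * rr) else rr)"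

definition gate :: "pauli \<Rightarrow> bool \<Rightarrow> bool \<Rightarrow> complex" where
  "gate s = (case s of PI \<Rightarrow> id2 | PZ \<Rightarrow> id2 | PX \<Rightarrow> Hd | PY \<Rightarrow> gY)"

definition zm :: "pauli \<Rightarrow> pauli" where "zm s = (if s = PI then PI else PZ)"

definition ceps :: "pauli \<Rightarrow> pauli \<Rightarrow> complex" where
  "ceps s t = (if s = PX \<and> t = PY then -1 else 1)"

definition cimg :: "pauli \<Rightarrow> pauli \<Rightarrow> pauli" where
  "cimg s t = (case s of PX \<Rightarrow> (case t of PX \<Rightarrow> PZ | PZ \<Rightarrow> PX | _ \<Rightarrow> t)
     | PY \<Rightarrow> (case t of PI \<Rightarrow> PI | PX \<Rightarrow> PY | PY \<Rightarrow> PZ | PZ \<Rightarrow> PX) | _ \<Rightarrow> t)"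

lemma g1: "m2 (m2 (a2 (gate s)) (pauli_entry (zm s))) (gate s) = pauli_entry s"
  by (cases s) (simp_all add: gate_def fun_eq_iff all_bool_eq m2_def a2_def id2_def Hd_def gY_def zm_def rr_sq rr_i)

lemma g2: "m2 (gate s) (a2 (gate s)) = id2"
  by (cases s) (simp_all add: gate_def fun_eq_iff all_bool_eq m2_def a2_def id2_def Hd_def gY_def rr_sq rr_i)

lemma g3: "m2 (m2 (gate s) (pauli_entry t)) (a2 (gate s)) = (\<lambda>a b. ceps s t * pauli_entry (cimg s t) a b)"
  by (cases s; cases t) (simp_all add: gate_def cimg_def fun_eq_iff all_bool_eq m2_def a2_def id2_def Hd_def gY_def ceps_def rr_sq rr_i)


lemma tens_cong: "(\<And>k. k < n \<Longrightarrow> G k = H k) \<Longrightarrow> tens n G = tens n H"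
  unfolding tens_def by (intro cong_mat refl) (auto intro!: prod.cong)

definition Dg :: "nat \<Rightarrow> pauli list \<Rightarrow> complex mat" where
  "Dg n p = tens n (\<lambda>k. gate (p!k))"

definition Zs :: "nat \<Rightarrow> pauli list \<Rightarrow> complex mat" where
  "Zs n p = pauli_string n (map zm p)"

lemma prod_pm1: "finite A \<Longrightarrow> (\<forall>k\<in>A. e k \<in> {1, -1::complex}) \<Longrightarrow> (\<Prod>k\<in>A. e k) \<in> {1, -1}"
  by (induction A rule: finite_induct) auto

lemma Dg_cliff: "Dg n p \<in> clifford_group n"
proof (rule cliff_I)
  let ?N = "(2::nat)^n"
  show "Dg n p \<in> carrier_mat ?N ?N" by (simp add: Dg_def)
  show "Dg n p * adj (Dg n p) = 1\<^sub>m ?N"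
    by (simp add: Dg_def adj_tens tens_mult g2 tens_id)
  have "m2 (a2 (gate s)) (gate s) = id2" for s
    by (cases s) (simp_all add: gate_def fun_eq_iff all_bool_eq m2_def a2_def id2_def Hd_def gY_def rr_sq rr_i)
  then show "adj (Dg n p) * Dg n p = 1\<^sub>m ?N"
    by (simp add: Dg_def adj_tens tens_mult tens_id)
  fix P assume "P \<in> pauli_group n"
  then obtain q where q: "length q = n" "P = pauli_string n q" by (auto simp: pauli_group_def)
  define q' where "q' = map (\<lambda>k. cimg (p!k) (q!k)) [0..<n]"
  have "Dg n p * P * adj (Dg n p) = tens n (\<lambda>k a b. ceps (p!k) (q!k) * pauli_entry (cimg (p!k) (q!k)) a b)"
    by (simp add: q Dg_def pauli_tens adj_tens tens_mult g3)
  also have "\<dots> = (\<Prod>k<n. ceps (p!k) (q!k)) \<cdot>\<^sub>m tens n (\<lambda>k. pauli_entry (cimg (p!k) (q!k)))"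
    by (rule tens_smult)
  also have "tens n (\<lambda>k. pauli_entry (cimg (p!k) (q!k))) = pauli_string n q'"
    unfolding pauli_tens q'_def by (rule tens_cong) simp
  finally have eq: "Dg n p * P * adj (Dg n p) = (\<Prod>k<n. ceps (p!k) (q!k)) \<cdot>\<^sub>m pauli_string n q'" .
  have "(\<Prod>k<n. ceps (p!k) (q!k)) \<in> {1, -1}" by (rule prod_pm1) (auto simp: ceps_def)
  then have "(\<Prod>k<n. ceps (p!k) (q!k)) \<in> Om" by (auto simp: Om_def)
  moreover have "pauli_string n q' \<in> pauli_group n" by (auto simp: pauli_group_def q'_def)
  ultimately show "\<exists>\<omega>\<in>Om. \<exists>Q\<in>pauli_group n. Dg n p * P * adj (Dg n p) = \<omega> \<cdot>\<^sub>m Q"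
    using eq by blast
qed

lemma Dg_Zs: "length p = n \<Longrightarrow> adj (Dg n p) * Zs n p * Dg n p = pauli_string n p"
  unfolding Dg_def Zs_def pauli_tens adj_tens tens_mult by (rule tens_cong) (simp add: g1)

lemma step3:
  assumes p: "length p = n" and C: "C \<in> carrier_mat (2^n) (2^n)" and psi: "\<psi> \<in> carrier_vec (2^n)"
  shows "expval (appn n (Dg n p * C) \<psi>) (Zs n p) = expval (appn n C \<psi>) (pauli_string n p)"
proof -
  have Dc: "Dg n p \<in> carrier_mat (2^n) (2^n)" by (simp add: Dg_def)
  have e1: "appn n (Dg n p * C) \<psi> = appn n (Dg n p) (appn n C \<psi>)" by (rule appn_mult[OF Dc C])
  have zc: "Zs n p \<in> carrier_mat (2^n) (2^n)" unfolding Zs_def by (rule pauli_carrier)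
  have vc: "appn n C \<psi> \<in> carrier_vec (2^n)" unfolding carrier_vec_def by simp
  have e2: "expval (appn n (Dg n p) (appn n C \<psi>)) (Zs n p) = expval (appn n C \<psi>) (adj (Dg n p) * Zs n p * Dg n p)"
    by (rule expval_appn[OF Dc zc vc])
  show ?thesis by (simp only: e1 e2 Dg_Zs[OF p])
qed

definition chi :: "pauli list \<Rightarrow> nat \<Rightarrow> real" where
  "chi p s = (\<Prod>k<length p. if p!k \<noteq> PI \<and> bit s k then -1 else 1)"

lemma diag_expval:
  assumes v: "dim_vec v = N" and M: "\<And>a b. a < N \<Longrightarrow> b < N \<Longrightarrow> a \<noteq> b \<Longrightarrow> M $$ (a,b) = 0"
  shows "expval v M = (\<Sum>a<N. cnj (v $ a) * M $$ (a,a) * v $ a)"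
proof -
  have "expval v M = (\<Sum>a<N. \<Sum>b<N. cnj (v $ a) * M $$ (a,b) * v $ b)" by (simp add: expval_def v)
  also have "\<dots> = (\<Sum>a<N. cnj (v $ a) * M $$ (a,a) * v $ a)"
  proof (rule sum.cong[OF refl])
    fix a assume a: "a \<in> {..<N}"
    have "(\<Sum>b<N. cnj (v $ a) * M $$ (a,b) * v $ b) = (\<Sum>b\<in>{a}. cnj (v $ a) * M $$ (a,b) * v $ b)"
      by (rule sum.mono_neutral_right) (use a M in auto)
    then show "(\<Sum>b<N. cnj (v $ a) * M $$ (a,b) * v $ b) = cnj (v $ a) * M $$ (a,a) * v $ a" by simp
  qed
  finally show ?thesis .
qed

lemma step2:
  assumes p: "length p = n"
  shows "expval (appn n C \<psi>) (Zs n p) = complex_of_real (\<Sum>s<2^n. chi p s * outcome_prob n \<psi> C s)"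
proof -
  let ?v = "appn n C \<psi>"
  have off: "Zs n p $$ (a,b) = 0" if ab: "a < 2^n" "b < 2^n" "a \<noteq> b" for a b
  proof -
    obtain k where k: "k < n" "bit a k \<noteq> bit b k" using bits_eq_iff[OF ab(1,2)] ab(3) by blast
    have "Zs n p $$ (a,b) = (\<Prod>k<n. pauli_entry (zm (p!k)) (bit a k) (bit b k))"
      using ab p by (simp add: Zs_def pauli_tens tens_index)
    also have "\<dots> = 0" using k by (intro prod_zero) (auto simp: zm_def intro!: bexI[of _ k])
    finally show ?thesis .
  qed
  have diag: "Zs n p $$ (a,a) = complex_of_real (chi p a)" if a: "a < 2^n" for a
  proof -
    have "Zs n p $$ (a,a) = (\<Prod>k<n. pauli_entry (map zm p ! k) (bit a k) (bit a k))"
      unfolding Zs_def pauli_tens by (rule tens_index[OF a a])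
    also have "\<dots> = (\<Prod>k<n. complex_of_real (if p!k \<noteq> PI \<and> bit a k then -1 else 1))"
      by (rule prod.cong[OF refl]) (use p in \<open>auto simp: zm_def\<close>)
    also have "\<dots> = complex_of_real (chi p a)" unfolding chi_def p of_real_prod ..
    finally show ?thesis .
  qed
  have "expval ?v (Zs n p) = (\<Sum>a<2^n. cnj (?v $ a) * Zs n p $$ (a,a) * ?v $ a)"
    by (rule diag_expval[OF _ off]) simp_all
  also have "\<dots> = (\<Sum>a<2^n. complex_of_real (chi p a * outcome_prob n \<psi> C a))"
  proof (rule sum.cong[OF refl])
    fix a assume a: "a \<in> {..<(2::nat)^n}"
    have "cnj (?v $ a) * Zs n p $$ (a,a) * ?v $ a = Zs n p $$ (a,a) * (?v $ a * cnj (?v $ a))" by (simp add: mult_ac)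
    also have "?v $ a * cnj (?v $ a) = complex_of_real ((cmod (?v $ a))^2)"
      by (rule complex_norm_square[symmetric])
    finally show "cnj (?v $ a) * Zs n p $$ (a,a) * ?v $ a = complex_of_real (chi p a * outcome_prob n \<psi> C a)"
      using a diag by (simp add: outcome_appn)
  qed
  also have "\<dots> = complex_of_real (\<Sum>s<2^n. chi p s * outcome_prob n \<psi> C s)" by simp
  finally show ?thesis .
qed


lemma chi_xor: "chi p (xor a b) = chi p a * chi p b"
  unfolding chi_def prod.distrib[symmetric] by (rule prod.cong) (auto simp: bit_xor_iff)

lemma sum_chi: "(\<Sum>p\<in>{p. length p = n}. chi p x) = (\<Prod>k<n. if bit x k then -2 else 4)"
proof -
  have "(\<Sum>p\<in>{p. length p = n}. chi p x) = (\<Sum>p\<in>{p. length p = n}. \<Prod>k<n. (\<lambda>k s. if s \<noteq> PI \<and> bit x k then -1 else (1::real)) k (p!k))"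
    by (rule sum.cong) (auto simp: chi_def)
  also have "\<dots> = (\<Prod>k<n. \<Sum>s\<in>UNIV. (\<lambda>k s. if s \<noteq> PI \<and> bit x k then -1 else (1::real)) k s)"
    by (rule sum_lists_prod)
  also have "\<dots> = (\<Prod>k<n. if bit x k then -2 else 4)"
    by (rule prod.cong) (auto simp: UNIV_pauli)
  finally show ?thesis .
qed

lemma w_eq: "(-2::real) powi (- int (hamming n x)) = (\<Sum>p\<in>{p. length p = n}. chi p x) / 4^n"
proof -
  define H where "H = {k. k < n \<and> bit x k}"
  define h where "h = card H"
  have Hsub: "H \<subseteq> {..<n}" by (auto simp: H_def)
  have hn: "h \<le> n" unfolding h_def using card_mono[OF _ Hsub] by simp
  have c1: "{..<n} \<inter> {k. bit x k} = H" by (auto simp: H_def)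
  have c2: "{..<n} \<inter> - {k. bit x k} = {..<n} - H" by (auto simp: H_def)
  have card2: "card ({..<n} - H) = n - h" unfolding h_def using card_Diff_subset[OF _ Hsub] finite_subset[OF Hsub] by simp
  have "(\<Prod>k<n. if bit x k then -2 else (4::real)) = (-2)^h * 4^(n-h)"
    by (simp add: prod.If_cases c1 c2 card2 h_def)
  then have S: "(\<Sum>p\<in>{p. length p = n}. chi p x) = (-2)^h * 4^(n-h)" by (simp add: sum_chi)
  have "(4::real)^n = 4^h * 4^(n-h)" using hn by (simp add: power_add[symmetric])
  moreover have "(4::real)^h = (-2)^h * (-2)^h" by (simp add: power_mult_distrib[symmetric])
  ultimately have "(-2)^h * 4^(n-h) / 4^n = inverse ((-2::real)^h)"
    by (simp add: field_simps)
  moreover have "hamming n x = h" by (simp add: hamming_def h_def H_def)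
  ultimately show ?thesis using S by (simp add: power_int_minus)
qed

lemma sum5_swap: "(\<Sum>a\<in>A. \<Sum>b\<in>A. \<Sum>c\<in>A. \<Sum>d\<in>A. \<Sum>p\<in>B. f a b c d p) = (\<Sum>p\<in>B. \<Sum>a\<in>A. \<Sum>b\<in>A. \<Sum>c\<in>A. \<Sum>d\<in>A. f a b c d p)"
proof -
  have "(\<Sum>a\<in>A. \<Sum>b\<in>A. \<Sum>c\<in>A. \<Sum>d\<in>A. \<Sum>p\<in>B. f a b c d p) = (\<Sum>a\<in>A. \<Sum>b\<in>A. \<Sum>c\<in>A. \<Sum>p\<in>B. \<Sum>d\<in>A. f a b c d p)"
    by (intro sum.cong refl) (rule sum.swap)
  also have "\<dots> = (\<Sum>a\<in>A. \<Sum>b\<in>A. \<Sum>p\<in>B. \<Sum>c\<in>A. \<Sum>d\<in>A. f a b c d p)"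
    by (intro sum.cong refl) (rule sum.swap)
  also have "\<dots> = (\<Sum>a\<in>A. \<Sum>p\<in>B. \<Sum>b\<in>A. \<Sum>c\<in>A. \<Sum>d\<in>A. f a b c d p)"
    by (intro sum.cong refl) (rule sum.swap)
  also have "\<dots> = (\<Sum>p\<in>B. \<Sum>a\<in>A. \<Sum>b\<in>A. \<Sum>c\<in>A. \<Sum>d\<in>A. f a b c d p)"
    by (rule sum.swap)
  finally show ?thesis .
qed

lemma sum_pow4: "(\<Sum>s\<in>A. g s)^4 = (\<Sum>a\<in>A. \<Sum>b\<in>A. \<Sum>c\<in>A. \<Sum>d\<in>A. g a * g b * g c * (g d :: real))"
proof -
  have "(\<Sum>s\<in>A. g s)^4 = (\<Sum>a\<in>A. g a) * ((\<Sum>b\<in>A. g b) * ((\<Sum>c\<in>A. g c) * (\<Sum>d\<in>A. g d)))"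
    by (simp add: power4_eq_xxxx)
  also have "\<dots> = (\<Sum>a\<in>A. \<Sum>b\<in>A. \<Sum>c\<in>A. \<Sum>d\<in>A. g a * (g b * (g c * g d)))"
    by (simp only: sum_distrib_right, simp only: sum_distrib_left)
  finally show ?thesis by (simp add: mult.assoc)
qed

lemma fourier:
  fixes \<pi> :: "nat \<Rightarrow> real"
  shows "(\<Sum>s1<2^n. \<Sum>s2<2^n. \<Sum>s3<2^n. \<Sum>s4<2^n.
      (-2) powi (- int (hamming n (xor (xor (xor s1 s2) s3) s4))) * (\<pi> s1 * \<pi> s2 * \<pi> s3 * \<pi> s4))
    = (\<Sum>p\<in>{p. length p = n}. (\<Sum>s<2^n. chi p s * \<pi> s)^4) / 4^n"
proof -
  let ?L = "{p :: pauli list. length p = n}"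
  let ?F = "\<lambda>s1 s2 s3 s4 p. (chi p s1 * \<pi> s1) * (chi p s2 * \<pi> s2) * (chi p s3 * \<pi> s3) * (chi p s4 * \<pi> s4)"
  have pt: "(-2) powi (- int (hamming n (xor (xor (xor s1 s2) s3) s4))) * (\<pi> s1 * \<pi> s2 * \<pi> s3 * \<pi> s4)
      = (\<Sum>p\<in>?L. ?F s1 s2 s3 s4 p) / 4^n" for s1 s2 s3 s4
    by (simp add: w_eq chi_xor sum_divide_distrib sum_distrib_left sum_distrib_right mult_ac)
  have "(\<Sum>s1<(2::nat)^n. \<Sum>s2<(2::nat)^n. \<Sum>s3<(2::nat)^n. \<Sum>s4<(2::nat)^n.
      (-2) powi (- int (hamming n (xor (xor (xor s1 s2) s3) s4))) * (\<pi> s1 * \<pi> s2 * \<pi> s3 * \<pi> s4))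
     = (\<Sum>s1<(2::nat)^n. \<Sum>s2<(2::nat)^n. \<Sum>s3<(2::nat)^n. \<Sum>s4<(2::nat)^n. \<Sum>p\<in>?L. ?F s1 s2 s3 s4 p) / 4^n"
    by (simp only: pt sum_divide_distrib)
  also have "(\<Sum>s1<(2::nat)^n. \<Sum>s2<(2::nat)^n. \<Sum>s3<(2::nat)^n. \<Sum>s4<(2::nat)^n. \<Sum>p\<in>?L. ?F s1 s2 s3 s4 p)
     = (\<Sum>p\<in>?L. \<Sum>s1<(2::nat)^n. \<Sum>s2<(2::nat)^n. \<Sum>s3<(2::nat)^n. \<Sum>s4<(2::nat)^n. ?F s1 s2 s3 s4 p)"
    by (rule sum5_swap)
  also have "\<dots> = (\<Sum>p\<in>?L. (\<Sum>s<2^n. chi p s * \<pi> s)^4)"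
    by (simp only: sum_pow4)
  finally show ?thesis .
qed


lemma avg_cmult: "c * clifford_avg n f = clifford_avg n (\<lambda>C. c * f C)"
  by (simp add: avg_def' sum_distrib_left)

lemma avg_div: "clifford_avg n f / c = clifford_avg n (\<lambda>C. f C / c)"
  by (simp add: avg_def' sum_divide_distrib mult.commute)

lemma avg_sum: "(\<Sum>s\<in>A. clifford_avg n (f s)) = clifford_avg n (\<lambda>C. \<Sum>s\<in>A. f s C)"
proof -
  have "(\<Sum>s\<in>A. clifford_avg n (f s)) = (\<Sum>s\<in>A. \<Sum>K\<in>clifford_mod_phase n. f s (rep K)) / real (card (clifford_mod_phase n))"
    by (simp add: avg_def' sum_divide_distrib)
  also have "\<dots> = (\<Sum>K\<in>clifford_mod_phase n. \<Sum>s\<in>A. f s (rep K)) / real (card (clifford_mod_phase n))"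
    by (subst sum.swap) (rule refl)
  finally show ?thesis by (simp add: avg_def')
qed

lemma phase_expval:
  assumes X: "X \<in> carrier_mat (2^n) (2^n)" and w: "cmod w = 1"
  shows "cmod (expval (appn n (w \<cdot>\<^sub>m X) \<psi>) M) = cmod (expval (appn n X \<psi>) M)"
proof -
  have "cnj w * w = 1"
  proof -
    have "cnj w * w = w * cnj w" by (rule mult.commute)
    also have "\<dots> = complex_of_real ((cmod w)^2)" by (rule complex_norm_square[symmetric])
    finally show ?thesis using w by simp
  qed
  then show ?thesis using X by (simp add: appn_smult expval_smult_vec)
qed

lemma main_aux:
  assumes fin: "finite (clifford_mod_phase n)" and psi: "\<psi> \<in> carrier_vec (2^n)"
  shows "(\<Sum>s1<2^n. \<Sum>s2<2^n. \<Sum>s3<2^n. \<Sum>s4<2^n.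
         (-2) powi (- int (hamming n (xor (xor (xor s1 s2) s3) s4))) * Qfun n \<psi> s1 s2 s3 s4)
       = (\<Sum>P\<in>pauli_group n. (Xi n \<psi> P)^2)"
proof -
  let ?L = "{p :: pauli list. length p = n}"
  let ?N = "(2::nat)^n"
  define G where "G p C = cmod (expval (appn n C \<psi>) (Zs n p)) ^ 4" for p C
  define H where "H p C = cmod (expval (appn n C \<psi>) (pauli_string n p)) ^ 4" for p C
  let ?w = "\<lambda>s1 s2 s3 s4. (-2::real) powi (- int (hamming n (xor (xor (xor s1 s2) s3) s4)))"
  have "(\<Sum>s1<2^n. \<Sum>s2<2^n. \<Sum>s3<2^n. \<Sum>s4<2^n. ?w s1 s2 s3 s4 * Qfun n \<psi> s1 s2 s3 s4)
      = clifford_avg n (\<lambda>C. \<Sum>s1<2^n. \<Sum>s2<2^n. \<Sum>s3<2^n. \<Sum>s4<2^n. ?w s1 s2 s3 s4 *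
          (outcome_prob n \<psi> C s1 * outcome_prob n \<psi> C s2 * outcome_prob n \<psi> C s3 * outcome_prob n \<psi> C s4))"
    by (simp only: Qfun_def avg_cmult avg_sum)
  also have "\<dots> = clifford_avg n (\<lambda>C. (\<Sum>p\<in>?L. G p C) / 4^n)"
  proof (rule avg_cong)
    fix K
    let ?C = "rep K"
    have "(\<Sum>s<2^n. chi p s * outcome_prob n \<psi> ?C s)^4 = G p ?C" if "p \<in> ?L" for p
    proof -
      have "G p ?C = cmod (complex_of_real (\<Sum>s<2^n. chi p s * outcome_prob n \<psi> ?C s)) ^ 4"
        using that by (simp add: G_def step2)
      also have "\<dots> = (\<Sum>s<2^n. chi p s * outcome_prob n \<psi> ?C s)^4"
        by (simp only: norm_of_real) (simp add: power_even_abs)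
      finally show ?thesis by simp
    qed
    then show "(\<Sum>s1<2^n. \<Sum>s2<2^n. \<Sum>s3<2^n. \<Sum>s4<2^n. ?w s1 s2 s3 s4 *
          (outcome_prob n \<psi> ?C s1 * outcome_prob n \<psi> ?C s2 * outcome_prob n \<psi> ?C s3 * outcome_prob n \<psi> ?C s4))
        = (\<Sum>p\<in>?L. G p ?C) / 4^n"
      by (simp add: fourier)
  qed
  also have "\<dots> = (\<Sum>p\<in>?L. clifford_avg n (G p)) / 4^n"
    by (simp only: avg_div avg_sum)
  also have "(\<Sum>p\<in>?L. clifford_avg n (G p)) = (\<Sum>p\<in>?L. clifford_avg n (H p))"
  proof (rule sum.cong[OF refl])
    fix p assume p: "p \<in> ?L"
    have "clifford_avg n (G p) = clifford_avg n (\<lambda>C. G p (Dg n p * C))"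
      by (rule avg_reindex[OF fin Dg_cliff, symmetric]) (simp add: G_def phase_expval)
    also have "\<dots> = clifford_avg n (H p)"
    proof (rule avg_cong)
      fix K assume "K \<in> clifford_mod_phase n"
      then have "rep K \<in> carrier_mat ?N ?N" by (rule rep_carrier)
      then show "G p (Dg n p * rep K) = H p (rep K)"
        using p psi by (simp add: G_def H_def step3)
    qed
    finally show "clifford_avg n (G p) = clifford_avg n (H p)" .
  qed
  also have "\<dots> = clifford_avg n (\<lambda>C. \<Sum>p\<in>?L. H p C)" by (rule avg_sum)
  also have "\<dots> = (\<Sum>p\<in>?L. cmod (expval \<psi> (pauli_string n p)) ^ 4)"
  proof (rule avg_const[OF fin])
    fix C z assume C: "C \<in> clifford_group n" and z: "cmod z = 1"
    have Cc: "C \<in> carrier_mat ?N ?N" using cliff_D(1)[OF C] .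
    have "(\<Sum>p\<in>?L. H p (z \<cdot>\<^sub>m C)) = (\<Sum>p\<in>?L. H p C)"
      using phase_expval[OF Cc z] by (simp add: H_def)
    also have "\<dots> = (\<Sum>p\<in>?L. cmod (expval \<psi> (pauli_string n p)) ^ 4)"
      unfolding H_def by (rule cliff_invariant[OF C psi])
    finally show "(\<Sum>p\<in>?L. H p (z \<cdot>\<^sub>m C)) = (\<Sum>p\<in>?L. cmod (expval \<psi> (pauli_string n p)) ^ 4)" .
  qed
  also have "(\<Sum>p\<in>?L. cmod (expval \<psi> (pauli_string n p)) ^ 4) / 4^n = (\<Sum>P\<in>pauli_group n. (Xi n \<psi> P)^2)"
  proof -
    have "(\<Sum>P\<in>pauli_group n. (Xi n \<psi> P)^2) = (\<Sum>p\<in>?L. (Xi n \<psi> (pauli_string n p))^2)"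
      unfolding pauli_group_def by (rule sum.reindex[OF pauli_inj, unfolded comp_def])
    also have "\<dots> = (\<Sum>p\<in>?L. cmod (expval \<psi> (pauli_string n p)) ^ 4 / 4^n)"
    proof (rule sum.cong[OF refl])
      fix p
      have e4: "((2::real)^n)^2 = 4^n" by (simp add: power2_eq_square power_mult_distrib[symmetric])
      have "(Xi n \<psi> (pauli_string n p))^2 = ((cmod (expval \<psi> (pauli_string n p)))^2)^2 / ((2::real)^n)^2"
        by (simp add: Xi_def power_divide)
      also have "((cmod (expval \<psi> (pauli_string n p)))^2)^2 = cmod (expval \<psi> (pauli_string n p)) ^ 4"
        by (simp add: power_mult[symmetric])
      finally show "(Xi n \<psi> (pauli_string n p))^2 = cmod (expval \<psi> (pauli_string n p)) ^ 4 / 4^n"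
        by (simp only: e4)
    qed
    finally show ?thesis by (simp add: sum_divide_distrib)
  qed
  finally show ?thesis .
qed


lemma single_twirl: "(\<Sum>s\<in>UNIV. pauli_entry s x y * cnj (pauli_entry s u v)) = (if x = u \<and> y = v then 2 else 0)"
  by (cases x; cases y; cases u; cases v) (simp_all add: UNIV_pauli)

lemma single_unit: "m2 (pauli_entry s) (a2 (pauli_entry s)) = id2"
  by (cases s) (simp_all add: fun_eq_iff all_bool_eq m2_def a2_def id2_def)

lemma pauli_unit: "pauli_string n p * adj (pauli_string n p) = 1\<^sub>m (2^n)"
proof -
  have "pauli_string n p * adj (pauli_string n p) = tens n (\<lambda>k. id2)"
    unfolding pauli_tens adj_tens tens_mult by (simp only: single_unit)
  then show ?thesis by (simp add: tens_id)
qed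

lemma card_L: "card {p :: pauli list. length p = n} = 4^n"
proof -
  have "card {p :: pauli list. length p = n} = card {xs. set xs \<subseteq> (UNIV :: pauli set) \<and> length xs = n}" by simp
  also have "\<dots> = card (UNIV :: pauli set) ^ n" by (rule card_lists_length_eq) simp
  also have "card (UNIV :: pauli set) = 4" by (simp add: UNIV_pauli)
  finally show ?thesis .
qed

lemma pauli_sum_prod:
  assumes a: "a < 2^n" and b: "b < 2^n" and c: "c < 2^n" and e: "e < 2^n"
  shows "(\<Sum>p\<in>{p. length p = n}. pauli_string n p $$ (a,c) * cnj (pauli_string n p $$ (b,e)))
    = (if a = b \<and> c = e then 2^n else 0)"
proof -
  have "(\<Sum>p\<in>{p. length p = n}. pauli_string n p $$ (a,c) * cnj (pauli_string n p $$ (b,e)))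
      = (\<Sum>p\<in>{p. length p = n}. \<Prod>k<n. (\<lambda>k s. pauli_entry s (bit a k) (bit c k) * cnj (pauli_entry s (bit b k) (bit e k))) k (p!k))"
    by (rule sum.cong[OF refl]) (simp add: pauli_tens tens_index a b c e prod.distrib)
  also have "\<dots> = (\<Prod>k<n. \<Sum>s\<in>UNIV. pauli_entry s (bit a k) (bit c k) * cnj (pauli_entry s (bit b k) (bit e k)))"
    by (rule sum_lists_prod)
  also have "\<dots> = (\<Prod>k<n. if bit a k = bit b k \<and> bit c k = bit e k then 2 else 0)"
    by (simp only: single_twirl)
  also have "\<dots> = (if \<forall>k\<in>{..<n}. bit a k = bit b k \<and> bit c k = bit e k then 2 ^ card {..<n} else 0)"
    by (rule prod_if2) simp
  also have "\<dots> = (if a = b \<and> c = e then 2^n else 0)"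
    using bits_eq_iff[OF a b] bits_eq_iff[OF c e] by auto
  finally show ?thesis .
qed

lemma twirl_entry:
  assumes M: "M \<in> carrier_mat (2^n) (2^n)" and a: "a < 2^n" and b: "b < 2^n"
  shows "(\<Sum>p\<in>{p. length p = n}. (pauli_string n p * M * adj (pauli_string n p)) $$ (a,b))
    = (if a = b then 2^n * trc M else 0)"
proof -
  let ?N = "(2::nat)^n"
  let ?L = "{p :: pauli list. length p = n}"
  let ?P = "pauli_string n"
  have ent: "(?P p * M * adj (?P p)) $$ (a,b) = (\<Sum>c<?N. \<Sum>e<?N. M $$ (c,e) * (?P p $$ (a,c) * cnj (?P p $$ (b,e))))" for p
  proof -
    have PM: "?P p * M \<in> carrier_mat ?N ?N" using M by simp
    have "(?P p * M * adj (?P p)) $$ (a,b) = (\<Sum>e<?N. (?P p * M) $$ (a,e) * adj (?P p) $$ (e,b))"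
      by (rule mult_index[OF PM _ a b]) simp
    also have "\<dots> = (\<Sum>e<?N. (\<Sum>c<?N. ?P p $$ (a,c) * M $$ (c,e)) * cnj (?P p $$ (b,e)))"
      by (rule sum.cong[OF refl]) (simp add: mult_index[OF _ M a] adj_index b)
    also have "\<dots> = (\<Sum>e<?N. \<Sum>c<?N. M $$ (c,e) * (?P p $$ (a,c) * cnj (?P p $$ (b,e))))"
      by (rule sum.cong[OF refl], subst sum_distrib_right, rule sum.cong[OF refl], simp add: mult_ac)
    also have "\<dots> = (\<Sum>c<?N. \<Sum>e<?N. M $$ (c,e) * (?P p $$ (a,c) * cnj (?P p $$ (b,e))))"
      by (rule sum.swap)
    finally show ?thesis .
  qed
  have "(\<Sum>p\<in>?L. (?P p * M * adj (?P p)) $$ (a,b))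
      = (\<Sum>c<?N. \<Sum>e<?N. M $$ (c,e) * (\<Sum>p\<in>?L. ?P p $$ (a,c) * cnj (?P p $$ (b,e))))"
  proof -
    have "(\<Sum>p\<in>?L. (?P p * M * adj (?P p)) $$ (a,b)) = (\<Sum>p\<in>?L. \<Sum>c<?N. \<Sum>e<?N. M $$ (c,e) * (?P p $$ (a,c) * cnj (?P p $$ (b,e))))"
      by (simp only: ent)
    also have "\<dots> = (\<Sum>c<?N. \<Sum>p\<in>?L. \<Sum>e<?N. M $$ (c,e) * (?P p $$ (a,c) * cnj (?P p $$ (b,e))))"
      by (rule sum.swap)
    also have "\<dots> = (\<Sum>c<?N. \<Sum>e<?N. \<Sum>p\<in>?L. M $$ (c,e) * (?P p $$ (a,c) * cnj (?P p $$ (b,e))))"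
      by (rule sum.cong[OF refl], rule sum.swap)
    also have "\<dots> = (\<Sum>c<?N. \<Sum>e<?N. M $$ (c,e) * (\<Sum>p\<in>?L. ?P p $$ (a,c) * cnj (?P p $$ (b,e))))"
      by (simp only: sum_distrib_left)
    finally show ?thesis .
  qed
  also have "\<dots> = (\<Sum>c<?N. \<Sum>e<?N. M $$ (c,e) * (if a = b \<and> c = e then 2^n else 0))"
    by (intro sum.cong refl) (simp add: pauli_sum_prod a b)
  also have "\<dots> = (if a = b then 2^n * trc M else 0)"
  proof (cases "a = b")
    case True
    have "(\<Sum>c<?N. \<Sum>e<?N. M $$ (c,e) * (if a = b \<and> c = e then 2^n else 0)) = (\<Sum>c<?N. M $$ (c,c) * 2^n)"
    proof (rule sum.cong[OF refl])
      fix c assume c: "c \<in> {..<?N}"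
      have "(\<Sum>e<?N. M $$ (c,e) * (if a = b \<and> c = e then 2^n else 0)) = (\<Sum>e\<in>{c}. M $$ (c,e) * (if a = b \<and> c = e then 2^n else 0))"
        by (rule sum.mono_neutral_right) (use c in auto)
      then show "(\<Sum>e<?N. M $$ (c,e) * (if a = b \<and> c = e then 2^n else 0)) = M $$ (c,c) * 2^n" using True by simp
    qed
    then show ?thesis using True M by (simp add: trc_def sum_distrib_left sum_distrib_right mult.commute)
  qed simp
  finally show ?thesis .
qed

lemma commutant_scalar:
  assumes M: "M \<in> carrier_mat (2^n) (2^n)"
    and comm: "\<And>p. length p = n \<Longrightarrow> M * pauli_string n p = pauli_string n p * M"
  shows "M = (trc M / 2^n) \<cdot>\<^sub>m 1\<^sub>m (2^n)"
proof (rule eq_matI)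
  let ?N = "(2::nat)^n"
  let ?L = "{p :: pauli list. length p = n}"
  fix a b assume "a < dim_row ((trc M / 2^n) \<cdot>\<^sub>m 1\<^sub>m ?N)" "b < dim_col ((trc M / 2^n) \<cdot>\<^sub>m 1\<^sub>m ?N)"
  then have a: "a < ?N" and b: "b < ?N" by auto
  have each: "(pauli_string n p * M * adj (pauli_string n p)) $$ (a,b) = M $$ (a,b)" if p: "p \<in> ?L" for p
  proof -
    have Pc: "pauli_string n p \<in> carrier_mat ?N ?N" by simp
    have "pauli_string n p * M * adj (pauli_string n p) = M * pauli_string n p * adj (pauli_string n p)"
      using comm p by simp
    also have "\<dots> = M * (pauli_string n p * adj (pauli_string n p))"
      using M Pc by (simp add: assocN[of _ ?N])
    also have "\<dots> = M" using M by (simp add: pauli_unit)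
    finally show ?thesis by simp
  qed
  have "(\<Sum>p\<in>?L. (pauli_string n p * M * adj (pauli_string n p)) $$ (a,b)) = of_nat (4^n) * M $$ (a,b)"
    using each card_L by simp
  then have "of_nat (4^n) * M $$ (a,b) = (if a = b then 2^n * trc M else 0)"
    using twirl_entry[OF M a b] by simp
  moreover have "(4::complex)^n = 2^n * 2^n" by (simp add: power_mult_distrib[symmetric])
  ultimately have "M $$ (a,b) = (if a = b then trc M / 2^n else 0)"
    by (auto simp: field_simps)
  then show "M $$ (a,b) = ((trc M / 2^n) \<cdot>\<^sub>m 1\<^sub>m ?N) $$ (a,b)" using a b by simp
qed (use M in auto)


lemma same_action_cls:
  assumes C1: "C1 \<in> clifford_group n" and C2: "C2 \<in> clifford_group n"
    and eq: "\<And>p. length p = n \<Longrightarrow> C1 * pauli_string n p * adj C1 = C2 * pauli_string n p * adj C2"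
  shows "cls C1 = cls C2"
proof -
  let ?N = "(2::nat)^n"
  have c1: "C1 \<in> carrier_mat ?N ?N" and u1: "C1 * adj C1 = 1\<^sub>m ?N" and v1: "adj C1 * C1 = 1\<^sub>m ?N"
    using cliff_D[OF C1] by auto
  have c2: "C2 \<in> carrier_mat ?N ?N" and u2: "C2 * adj C2 = 1\<^sub>m ?N" and v2: "adj C2 * C2 = 1\<^sub>m ?N"
    using cliff_D[OF C2] by auto
  have a1: "adj C1 \<in> carrier_mat ?N ?N" and a2c: "adj C2 \<in> carrier_mat ?N ?N" using c1 c2 by auto
  define M where "M = adj C2 * C1"
  have Mc: "M \<in> carrier_mat ?N ?N" using a2c c1 by (simp add: M_def)
  have comm: "M * pauli_string n p = pauli_string n p * M" if p: "length p = n" for p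
  proof -
    let ?P = "pauli_string n p"
    have Pc: "?P \<in> carrier_mat ?N ?N" by simp
    have "M * ?P = adj C2 * (C1 * ?P * adj C1) * C1"
    proof -
      have "adj C2 * (C1 * ?P * adj C1) * C1 = adj C2 * C1 * ?P * (adj C1 * C1)"
        using a2c c1 a1 Pc by (simp add: assocN[of _ ?N])
      then show ?thesis using v1 Mc Pc by (simp add: M_def)
    qed
    also have "\<dots> = adj C2 * (C2 * ?P * adj C2) * C1" using eq[OF p] by simp
    also have "\<dots> = (adj C2 * C2) * ?P * (adj C2 * C1)"
      using a2c c2 c1 Pc by (simp add: assocN[of _ ?N])
    also have "\<dots> = ?P * M" using v2 Pc by (simp add: M_def)
    finally show ?thesis .
  qed
  define lam where "lam = trc M / 2^n"
  have Ms: "M = lam \<cdot>\<^sub>m 1\<^sub>m ?N" unfolding lam_def by (rule commutant_scalar[OF Mc comm])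
  have "C1 = C2 * M"
  proof -
    have "C2 * M = (C2 * adj C2) * C1" using c2 a2c c1 by (simp add: M_def assocN[of _ ?N])
    then show ?thesis using u2 c1 by simp
  qed
  then have C1eq: "C1 = lam \<cdot>\<^sub>m C2" using c2 by (simp add: Ms mult_smult_distrib[where nr="?N" and n="?N" and nc="?N"])
  have "1\<^sub>m ?N = C1 * adj C1" using u1 by simp
  also have "\<dots> = (lam * cnj lam) \<cdot>\<^sub>m (C2 * adj C2)"
    using c2 a2c by (simp add: C1eq adj_smult mult_smult_distrib[where nr="?N" and n="?N" and nc="?N"]
        mult_smult_assoc_mat[where nr="?N" and n="?N" and nc="?N"] smult_smult_mat mult.commute)
  also have "\<dots> = (lam * cnj lam) \<cdot>\<^sub>m 1\<^sub>m ?N" using u2 by simp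
  finally have "(1\<^sub>m ?N :: complex mat) $$ (0,0) = ((lam * cnj lam) \<cdot>\<^sub>m 1\<^sub>m ?N) $$ (0,0)" by simp
  then have "lam * cnj lam = 1" by simp
  then have "complex_of_real ((cmod lam)^2) = 1" by (simp only: complex_norm_square)
  then have "(cmod lam)^2 = 1" by (metis of_real_eq_1_iff)
  then have "cmod lam = 1" using norm_ge_zero[of lam] by (simp add: power2_eq_1_iff)
  then show ?thesis using C1eq cls_smult by simp
qed

lemma cmp_finite: "finite (clifford_mod_phase n)"
proof -
  let ?L = "{p :: pauli list. length p = n}"
  let ?S = "(\<lambda>(w, q). w \<cdot>\<^sub>m pauli_string n q) ` (Om \<times> ?L)"
  define act where "act C = restrict (\<lambda>p. C * pauli_string n p * adj C) ?L" for C
  define g where "g F = cls (SOME C. C \<in> clifford_group n \<and> act C = F)" for F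
  have finS: "finite ?S" using fin_L by (simp add: Om_def)
  have act_in: "act C \<in> PiE ?L (\<lambda>_. ?S)" if C: "C \<in> clifford_group n" for C
    unfolding act_def
  proof (rule iffD2[OF restrict_PiE_iff], rule ballI)
    fix p assume p: "p \<in> ?L"
    then have "pauli_string n p \<in> pauli_group n" by (auto simp: pauli_group_def)
    from cliff_D(4)[OF C this] obtain w Q where w: "w \<in> Om" "Q \<in> pauli_group n" "C * pauli_string n p * adj C = w \<cdot>\<^sub>m Q"
      by blast
    then obtain q where q: "q \<in> ?L" "Q = pauli_string n q" by (auto simp: pauli_group_def)
    show "C * pauli_string n p * adj C \<in> ?S" using w q by (auto intro!: image_eqI[of _ _ "(w, q)"])
  qed
  have sub: "clifford_mod_phase n \<subseteq> g ` (act ` clifford_group n)"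
  proof
    fix K assume "K \<in> clifford_mod_phase n"
    then obtain C where C: "C \<in> clifford_group n" "K = cls C" unfolding cmp_def' by blast
    define C' where "C' = (SOME C'. C' \<in> clifford_group n \<and> act C' = act C)"
    have C': "C' \<in> clifford_group n \<and> act C' = act C" unfolding C'_def by (rule someI[of _ C]) (use C in simp)
    have "cls C' = cls C"
    proof (rule same_action_cls)
      show "C' \<in> clifford_group n" using C' by simp
      show "C \<in> clifford_group n" using C by simp
      fix p :: "pauli list" assume p: "length p = n"
      have "act C' p = act C p" using C' by simp
      then show "C' * pauli_string n p * adj C' = C * pauli_string n p * adj C" using p by (simp add: act_def)
    qed
    then have "K = g (act C)" using C by (simp add: g_def C'_def)
    then show "K \<in> g ` (act ` clifford_group n)" using C by blast
  qed
  have "act ` clifford_group n \<subseteq> PiE ?L (\<lambda>_. ?S)" using act_in by blast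
  then have "finite (act ` clifford_group n)" by (rule finite_subset) (intro finite_PiE fin_L finS)
  then show ?thesis using sub by (meson finite_imageI finite_subset)
qed

theorem mainTheorem3:
  fixes n :: nat and \<psi> :: "complex vec"
  assumes "n \<ge> 1" and "is_state n \<psi>"
  shows "M2 n \<psi> =
    - log 2 (\<Sum>s1<2^n. \<Sum>s2<2^n. \<Sum>s3<2^n. \<Sum>s4<2^n.
         (-2) powi (- int (hamming n (xor (xor (xor s1 s2) s3) s4))) * Qfun n \<psi> s1 s2 s3 s4)
    - log 2 (2^n)"
proof -
  have psi: "\<psi> \<in> carrier_vec (2^n)" using assms(2) by (simp add: is_state_def)
  show ?thesis unfolding M2_def by (simp only: main_aux[OF cmp_finite psi])
qed

end
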